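(* (1) Let $R$ be a uniquely clean ring. Then $R$ is $n$-torsion clean if and only if $U(R)$ has exponent $n$. (2) Let $R$ be a ring such that $R/J(R)$ is boolean and $J(R)$ is nil of bounded index. Then $R$ is $n$-torsion clean, where $n$ is the exponent of $U(R)$. Moreover, $n$ is a power of $2$.
   Context: All rings are associative with identity; $U(R)$ is the unit group and $J(R)$ the Jacobson radical. A ring is uniquely clean if every element has a unique expression as $e+u$ with $e$ idempotent and $u$ a unit. A ring $R$ is $n$-torsion clean if every $r\in R$ can be written $r=e+u$ with $e^2=e$, $u\in U(R)$, $u^n=1$, and $n$ is the smallest natural number with this property. An ideal $I$ is nil of bounded index if there is $k$ with $r^k=0$ for all $r\in I$. *)

theory Defs
  imports Main
begin

definition is_unit :: "'a::ring_1 \<Rightarrow> bool" where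
  "is_unit u \<longleftrightarrow> (\<exists>v. u * v = 1 \<and> v * u = 1)"

definition idem :: "'a::ring_1 \<Rightarrow> bool" where
  "idem e \<longleftrightarrow> e * e = e"

definition uniquely_clean :: "'a::ring_1 itself \<Rightarrow> bool" where
  "uniquely_clean _ \<longleftrightarrow>
     (\<forall>r::'a. \<exists>!p. idem (fst p) \<and> is_unit (snd p) \<and> r = fst p + snd p)"

definition torsion_clean_with :: "'a::ring_1 itself \<Rightarrow> nat \<Rightarrow> bool" where
  "torsion_clean_with _ m \<longleftrightarrow>
     (\<forall>r::'a. \<exists>e u. idem e \<and> is_unit u \<and> u ^ m = 1 \<and> r = e + u)"

definition n_torsion_clean :: "'a::ring_1 itself \<Rightarrow> nat \<Rightarrow> bool" where
  "n_torsion_clean T n \<longleftrightarrow> 0 < n \<and> torsion_clean_with T n \<and>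
     (\<forall>m. 0 < m \<and> m < n \<longrightarrow> \<not> torsion_clean_with T m)"

definition unit_exponent :: "'a::ring_1 itself \<Rightarrow> nat \<Rightarrow> bool" where
  "unit_exponent _ n \<longleftrightarrow> 0 < n \<and> (\<forall>u::'a. is_unit u \<longrightarrow> u ^ n = 1) \<and>
     (\<forall>m. 0 < m \<and> m < n \<longrightarrow> \<not> (\<forall>u::'a. is_unit u \<longrightarrow> u ^ m = 1))"

definition left_ideal :: "'a::ring_1 set \<Rightarrow> bool" where
  "left_ideal I \<longleftrightarrow> 0 \<in> I \<and> (\<forall>x\<in>I. \<forall>y\<in>I. x + y \<in> I) \<and> (\<forall>x\<in>I. - x \<in> I)
     \<and> (\<forall>r x. x \<in> I \<longrightarrow> r * x \<in> I)"

definition maximal_left_ideal :: "'a::ring_1 set \<Rightarrow> bool" where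
  "maximal_left_ideal I \<longleftrightarrow> left_ideal I \<and> I \<noteq> UNIV \<and>
     (\<forall>K. left_ideal K \<and> I \<subseteq> K \<longrightarrow> K = I \<or> K = UNIV)"

definition jacobson :: "'a::ring_1 set" where
  "jacobson = \<Inter> {I. maximal_left_ideal I}"

text \<open>R/J(R) is boolean: every coset x + J(R) is idempotent, i.e. x*x - x \<in> J(R).\<close>
definition boolean_mod_jacobson :: "'a::ring_1 itself \<Rightarrow> bool" where
  "boolean_mod_jacobson _ \<longleftrightarrow> (\<forall>x::'a. x * x - x \<in> jacobson)"

definition nil_bounded_index :: "'a::ring_1 set \<Rightarrow> bool" where
  "nil_bounded_index I \<longleftrightarrow> (\<exists>k. \<forall>r\<in>I. r ^ k = 0)"

end

theory Submission
  imports Defs "HOL-Computational_Algebra.Primes"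
begin

lemma jac_zero: "0 \<in> (jacobson :: 'a::ring_1 set)"
  by (auto simp: jacobson_def maximal_left_ideal_def left_ideal_def)

lemma jac_add: "x \<in> jacobson \<Longrightarrow> y \<in> jacobson \<Longrightarrow> x + y \<in> (jacobson :: 'a::ring_1 set)"
  by (auto simp: jacobson_def maximal_left_ideal_def left_ideal_def)

lemma jac_neg: "x \<in> jacobson \<Longrightarrow> - x \<in> (jacobson :: 'a::ring_1 set)"
  by (auto simp: jacobson_def maximal_left_ideal_def left_ideal_def)

lemma jac_lmult: "x \<in> jacobson \<Longrightarrow> r * x \<in> (jacobson :: 'a::ring_1 set)"
  by (auto simp: jacobson_def maximal_left_ideal_def left_ideal_def)

lemma jac_diff: "x \<in> jacobson \<Longrightarrow> y \<in> jacobson \<Longrightarrow> x - y \<in> (jacobson :: 'a::ring_1 set)"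
  using jac_add[OF _ jac_neg] by (metis diff_conv_add_uminus)

lemma nil_pow_ge: "\<forall>r\<in>I. r ^ k = 0 \<Longrightarrow> (x::'a::ring_1) \<in> I \<Longrightarrow> k \<le> m \<Longrightarrow> x ^ m = 0"
proof -
  assume a: "\<forall>r\<in>I. r ^ k = 0" "x \<in> I" "k \<le> m"
  then have "x ^ m = x ^ (m - k) * x ^ k" by (metis le_add_diff_inverse2 power_add)
  then show ?thesis using a by simp
qed

lemma geom_unit:
  fixes y :: "'a::ring_1"
  shows "(1 - y) * (\<Sum>i<k. y ^ i) = 1 - y ^ k \<and> (\<Sum>i<k. y ^ i) * (1 - y) = 1 - y ^ k"
proof (induction k)
  case 0 then show ?case by simp
next
  case (Suc k)
  have "(1 - y) * (\<Sum>i<Suc k. y ^ i) = (1 - y) * (\<Sum>i<k. y ^ i) + (1 - y) * y ^ k"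
    by (simp add: distrib_left)
  also have "\<dots> = 1 - y ^ k + (y ^ k - y * y ^ k)"
    by (subst Suc.IH[THEN conjunct1]) (simp add: left_diff_distrib)
  also have "\<dots> = 1 - y * y ^ k" by (simp add: algebra_simps)
  also have "\<dots> = 1 - y ^ Suc k" by (simp only: power_Suc)
  finally have 1: "(1 - y) * (\<Sum>i<Suc k. y ^ i) = 1 - y ^ Suc k" .
  have "(\<Sum>i<Suc k. y ^ i) * (1 - y) = (\<Sum>i<k. y ^ i) * (1 - y) + y ^ k * (1 - y)"
    by (simp add: distrib_right)
  also have "\<dots> = 1 - y ^ k + (y ^ k - y ^ k * y)"
    by (subst Suc.IH[THEN conjunct2]) (simp add: right_diff_distrib)
  also have "\<dots> = 1 - y ^ k * y" by (simp add: algebra_simps)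
  also have "\<dots> = 1 - y ^ Suc k" by (simp only: power_Suc2)
  finally show ?case using 1 by simp
qed

lemma one_plus_nil_unit:
  fixes j :: "'a::ring_1"
  assumes "j ^ k = 0"
  shows "is_unit (1 + j)"
proof -
  have z: "(- j) ^ k = 0" using assms by (simp add: power_minus[of j k])
  have e: "1 + j = 1 - (- j)" by simp
  have g: "(1 - (- j)) * (\<Sum>i<k. (- j) ^ i) = 1 - (- j) ^ k \<and> (\<Sum>i<k. (- j) ^ i) * (1 - (- j)) = 1 - (- j) ^ k"
    by (rule geom_unit)
  show ?thesis unfolding is_unit_def e
    by (rule exI[of _ "\<Sum>i<k. (- j) ^ i"]) (simp only: g z diff_zero)
qed


definition ff :: "'a::ring_1 \<Rightarrow> 'a" where "ff y = y*y + y*y + y*y - (y*y*y + y*y*y)"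
definition ww :: "'a::ring_1 \<Rightarrow> 'a" where "ww b = b + b + b + b - 1 - 1 - 1"

lemma ff_diff: "(y::'a::ring_1) - ff y = (y + y - 1) * (y*y - y)"
  unfolding ff_def by (simp add: algebra_simps)

lemma ff_sq: "ff (y::'a::ring_1) * ff y - ff y = (y*y - y) * (y*y - y) * ww (y*y - y)"
  unfolding ff_def ww_def by (simp add: algebra_simps del: one_add_one)

lemma ww_comm: "(b::'a::ring_1) * ww b = ww b * b"
  unfolding ww_def by (simp add: algebra_simps del: one_add_one)

lemma pow_comm_mult:
  fixes y w :: "'a::ring_1"
  assumes "y * w = w * y"
  shows "(y * w) ^ n = y ^ n * w ^ n"
proof (induction n)
  case 0 then show ?case by simp
next
  case (Suc n)
  have c: "y ^ n * w = w * y ^ n" by (rule power_commuting_commutes[OF assms])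
  have "(y * w) ^ Suc n = y * (w * y ^ n) * w ^ n" using Suc by (simp add: mult.assoc)
  also have "\<dots> = y * (y ^ n * w) * w ^ n" using c by simp
  also have "\<dots> = y ^ Suc n * w ^ Suc n" by (simp add: mult.assoc)
  finally show ?case .
qed

lemma lift_idem:
  fixes x :: "'a::ring_1"
  assumes B: "\<forall>x::'a. x*x - x \<in> jacobson" and N: "\<forall>r\<in>(jacobson::'a set). r^k = 0"
  shows "\<exists>e. idem e \<and> x - e \<in> jacobson"
proof -
  define xs where "xs t = (ff ^^ t) x" for t
  have S: "xs (Suc t) = ff (xs t)" for t by (simp add: xs_def)
  have inJ: "x - xs t \<in> jacobson" for t
  proof (induction t)
    case 0 then show ?case by (simp add: xs_def jac_zero)
  next
    case (Suc t)
    have "x - xs (Suc t) = (x - xs t) + (xs t + xs t - 1) * (xs t * xs t - xs t)"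
      using ff_diff[of "xs t"] S[of t] by (simp add: algebra_simps)
    moreover have "(xs t + xs t - 1) * (xs t * xs t - xs t) \<in> jacobson" using B jac_lmult by blast
    ultimately show ?case using Suc jac_add by metis
  qed
  have nilp: "(xs t * xs t - xs t) ^ Suc (k div 2^t) = 0" for t
  proof (induction t)
    case 0
    show ?case using nil_pow_ge[OF N, of "xs 0 * xs 0 - xs 0" "Suc k"] B by simp
  next
    case (Suc t)
    define b where "b = xs t * xs t - xs t"
    define q where "q = k div 2^t"
    define n where "n = Suc (k div 2^(Suc t))"
    have qd: "k div 2^(Suc t) = q div 2" unfolding q_def
      by (metis div_mult2_eq power_Suc2)
    have le: "Suc q \<le> 2 * n" unfolding n_def qd by simp
    have a: "xs (Suc t) * xs (Suc t) - xs (Suc t) = (b * b) * ww b"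
      unfolding S b_def by (rule ff_sq)
    have cm: "(b * b) * ww b = ww b * (b * b)"
      by (metis ww_comm mult.assoc)
    have bq: "b ^ Suc q = 0" using Suc unfolding b_def q_def .
    have "b ^ (2 * n) = b ^ (2 * n - Suc q) * b ^ Suc q"
      using le by (metis le_add_diff_inverse2 power_add)
    then have b2: "b ^ (2 * n) = 0" using bq by simp
    have "(b * b) ^ n = b ^ (2 * n)" by (simp add: power_mult power2_eq_square)
    then have "((b * b) * ww b) ^ n = 0" using pow_comm_mult[OF cm, of n] b2 by simp
    then show ?case using a n_def by simp
  qed
  have "k < 2 ^ k" by (rule less_exp)
  then have "k div 2 ^ k = 0" by simp
  then have "(xs k * xs k - xs k) ^ 1 = 0" using nilp[of k] by simp
  then have "idem (xs k)" unfolding idem_def by simp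
  then show ?thesis using inJ by blast
qed

lemma unit_J:
  assumes B: "\<forall>x::'a::ring_1. x*x - x \<in> jacobson" and u: "is_unit (u::'a)"
  shows "u - 1 \<in> jacobson"
proof -
  obtain v where v: "u * v = 1" "v * u = 1" using u unfolding is_unit_def by blast
  have "v * (u * u - u) \<in> jacobson" using B jac_lmult by blast
  moreover have "v * (u * u - u) = u - 1" using v
    by (simp add: right_diff_distrib mult.assoc[symmetric])
  ultimately show ?thesis by simp
qed


inductive WWp :: "'a::ring_1 \<Rightarrow> nat \<Rightarrow> 'a \<Rightarrow> bool" for j :: 'a where
  W0: "WWp j w (0)"
| Wgen: "w \<le> a + b \<Longrightarrow> WWp j w (j ^ b * of_nat (2 ^ a))"
| Wadd: "WWp j w x \<Longrightarrow> WWp j w y \<Longrightarrow> WWp j w (x + y)"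

lemma WW_mono: "WWp j w (x) \<Longrightarrow> v \<le> w \<Longrightarrow> WWp j v (x)"
  by (induction rule: WWp.induct) (metis WWp.intros le_trans)+

lemma WW_gen_mult:
  assumes "WWp j v (y)" and "w \<le> a + b"
  shows "WWp j (w + v) (j ^ b * of_nat (2 ^ a) * y)"
  using assms(1)
proof (induction rule: WWp.induct)
  case (W0 w') then show ?case by (simp add: WWp.W0)
next
  case (Wgen v' a' b')
  have "j ^ b * of_nat (2 ^ a) * (j ^ b' * of_nat (2 ^ a')) = j ^ (b + b') * of_nat (2 ^ (a + a'))"
  proof -
    have "j ^ b * of_nat (2 ^ a) * (j ^ b' * of_nat (2 ^ a')) = j ^ b * (of_nat (2 ^ a) * j ^ b') * of_nat (2 ^ a')"
      by (simp add: mult.assoc)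
    also have "\<dots> = j ^ b * (j ^ b' * of_nat (2 ^ a)) * of_nat (2 ^ a')"
      by (metis mult_of_nat_commute)
    also have "\<dots> = j ^ (b + b') * of_nat (2 ^ (a + a'))"
      by (simp add: mult.assoc power_add)
    finally show ?thesis .
  qed
  moreover have "w + v' \<le> (a + a') + (b + b')" using Wgen assms(2) by simp
  ultimately show ?case by (metis WWp.Wgen)
next
  case (Wadd x y w') then show ?case by (simp add: distrib_left WWp.Wadd)
qed

lemma WW_mult: "WWp j w (x) \<Longrightarrow> WWp j v (y) \<Longrightarrow> WWp j (w + v) (x * y)"
proof (induction rule: WWp.induct)
  case (W0 w) then show ?case by (simp add: WWp.W0)
next
  case (Wgen w a b) then show ?case using WW_gen_mult by blast
next
  case (Wadd x y w) then show ?case by (simp add: distrib_right WWp.Wadd)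
qed

lemma WW_zero:
  assumes t: "(of_nat (2 ^ k) :: 'a::ring_1) = 0" and jk: "(j::'a) ^ k = 0"
  shows "WWp j w (x) \<Longrightarrow> 2 * k \<le> w \<Longrightarrow> x = 0"
proof (induction rule: WWp.induct)
  case (W0 w) then show ?case by simp
next
  case (Wgen w a b)
  show ?case
  proof (cases "k \<le> b")
    case True
    then have "j ^ b = j ^ (b - k) * j ^ k" by (metis le_add_diff_inverse2 power_add)
    then show ?thesis using jk by simp
  next
    case False
    then have "k \<le> a" using Wgen by simp
    then have "(of_nat (2 ^ a) :: 'a) = of_nat (2 ^ (a - k)) * of_nat (2 ^ k)"
      by (metis le_add_diff_inverse2 power_add of_nat_mult)
    then show ?thesis using t by simp
  qed
next
  case (Wadd x y w) then show ?case by simp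
qed

lemma units_pow2:
  assumes B: "\<forall>x::'a::ring_1. x*x - x \<in> jacobson" and N: "\<forall>r\<in>(jacobson::'a set). r^k = 0"
    and u: "is_unit (u::'a)"
  shows "u ^ (2 ^ (2 * k)) = 1"
proof -
  define j where "j = u - 1"
  have jJ: "j \<in> jacobson" using unit_J[OF B u] j_def by simp
  have jk: "j ^ k = 0" using N jJ by blast
  have "(1 + 1) * (1 + 1) - (1 + 1) \<in> (jacobson :: 'a set)" using B by blast
  then have "(of_nat 2 :: 'a) \<in> jacobson" by (simp add: algebra_simps)
  then have "(of_nat 2 :: 'a) ^ k = 0" using N by blast
  then have t: "(of_nat (2 ^ k) :: 'a) = 0" by (simp only: of_nat_power)
  have two: "WWp j 1 ((2::'a))" using WWp.Wgen[where j=j and w=1 and a=1 and b=0] by simp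
  have inW: "WWp j (Suc t) (u ^ (2 ^ t) - 1)" for t
  proof (induction t)
    case 0
    show ?case using WWp.Wgen[where j=j and w=1 and a=0 and b=1] j_def by simp
  next
    case (Suc t)
    define y where "y = u ^ (2 ^ t) - 1"
    have "u ^ (2 ^ Suc t) = (1 + y) * (1 + y)" unfolding y_def
      by (simp add: power_mult[symmetric] power2_eq_square[symmetric] mult.commute)
    then have e: "u ^ (2 ^ Suc t) - 1 = y * 2 + y * y" by (simp add: algebra_simps mult_2_right)
    have yW: "WWp j (Suc t) (y)" using Suc y_def by simp
    have 1: "WWp j (Suc t + 1) (y * 2)" by (rule WW_mult[OF yW two])
    have "WWp j (Suc t + Suc t) (y * y)" by (rule WW_mult[OF yW yW])
    then have 2: "WWp j (Suc t + 1) (y * y)" by (rule WW_mono) simp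
    show ?case unfolding e using WWp.Wadd[OF 1 2] by simp
  qed
  have "u ^ (2 ^ (2 * k)) - 1 = 0"
    by (rule WW_zero[OF t jk inW[of "2 * k"]]) simp
  then show ?thesis by simp
qed


lemma idem_pow: "idem (e::'a::ring_1) \<Longrightarrow> e ^ Suc n = e"
  by (induction n) (simp_all add: idem_def)

lemma part1:
  assumes U: "uniquely_clean TYPE('a::ring_1)"
  shows "torsion_clean_with TYPE('a) m \<longleftrightarrow> (\<forall>u::'a. is_unit u \<longrightarrow> u ^ m = 1)"
proof
  assume T: "torsion_clean_with TYPE('a) m"
  show "\<forall>u::'a. is_unit u \<longrightarrow> u ^ m = 1"
  proof (intro allI impI)
    fix v :: 'a assume v: "is_unit v"
    obtain e w where ew: "idem e" "is_unit w" "w ^ m = 1" "v = e + w"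
      using T unfolding torsion_clean_with_def by blast
    have ex1: "\<exists>!p. idem (fst p) \<and> is_unit (snd p) \<and> v = fst p + snd p"
      using U unfolding uniquely_clean_def by blast
    then obtain p where "\<forall>q. idem (fst q) \<and> is_unit (snd q) \<and> v = fst q + snd q \<longrightarrow> q = p"
      by (auto simp only: Ex1_def)
    moreover have "idem (fst (e, w)) \<and> is_unit (snd (e, w)) \<and> v = fst (e, w) + snd (e, w)"
      using ew by simp
    moreover have "idem (fst (0::'a, v)) \<and> is_unit (snd (0::'a, v)) \<and> v = fst (0::'a, v) + snd (0::'a, v)"
      using v by (simp add: idem_def)
    ultimately have "(e, w) = (0, v)" by metis
    then show "v ^ m = 1" using ew by simp
  qed
next
  assume P: "\<forall>u::'a. is_unit u \<longrightarrow> u ^ m = 1"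
  show "torsion_clean_with TYPE('a) m" unfolding torsion_clean_with_def
  proof
    fix r :: 'a
    obtain p where "idem (fst p) \<and> is_unit (snd p) \<and> r = fst p + snd p"
      using U unfolding uniquely_clean_def by blast
    then show "\<exists>e u. idem e \<and> is_unit u \<and> u ^ m = 1 \<and> r = e + u" using P by blast
  qed
qed

lemma part2:
  assumes B: "boolean_mod_jacobson TYPE('a::ring_1)" and NB: "nil_bounded_index (jacobson :: 'a set)"
  shows "\<exists>n. unit_exponent TYPE('a) n \<and> n_torsion_clean TYPE('a) n \<and> (\<exists>k. n = 2 ^ k)"
proof -
  have B': "\<forall>x::'a. x*x - x \<in> jacobson" using B unfolding boolean_mod_jacobson_def by blast
  obtain k where N: "\<forall>r\<in>(jacobson::'a set). r^k = 0" using NB unfolding nil_bounded_index_def by blast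
  define P where "P m \<longleftrightarrow> (\<forall>u::'a. is_unit u \<longrightarrow> u ^ m = 1)" for m
  define T :: nat where "T = 2 ^ (2 * k)"
  have PT: "P T" unfolding P_def T_def using units_pow2[OF B' N] by blast
  have Tpos: "0 < T" unfolding T_def by simp
  define n where "n = (LEAST m. 0 < m \<and> P m)"
  have n1: "0 < n \<and> P n" unfolding n_def by (rule LeastI[of _ T]) (use PT Tpos in blast)
  have nmin: "\<not> P m" if "0 < m" "m < n" for m
    using not_less_Least[of m "\<lambda>m. 0 < m \<and> P m"] that unfolding n_def by blast
  have UE: "unit_exponent TYPE('a) n"
    unfolding unit_exponent_def using n1 nmin unfolding P_def by blast
  have "P (T mod n)" unfolding P_def
  proof (intro allI impI)
    fix u :: 'a assume u: "is_unit u"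
    have "u ^ T = u ^ (n * (T div n) + T mod n)" by simp
    also have "\<dots> = (u ^ n) ^ (T div n) * u ^ (T mod n)" by (simp only: power_add power_mult)
    finally have "u ^ T = (u ^ n) ^ (T div n) * u ^ (T mod n)" .
    then show "u ^ (T mod n) = 1" using u n1 PT unfolding P_def by simp
  qed
  then have "T mod n = 0" using nmin[of "T mod n"] n1 mod_less_divisor[of n T] by linarith
  then have "n dvd 2 ^ (2 * k)" unfolding T_def by auto
  then have pow: "\<exists>i. n = 2 ^ i" using divides_primepow_nat[OF two_is_prime_nat] by blast
  have clean: "torsion_clean_with TYPE('a) n" unfolding torsion_clean_with_def
  proof
    fix r :: 'a
    obtain e where e: "idem e" "(r - 1) - e \<in> jacobson" using lift_idem[OF B' N] by blast
    define u where "u = r - e"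
    have ue: "u = 1 + ((r - 1) - e)" unfolding u_def by simp
    have "((r - 1) - e) ^ k = 0" using N e(2) by blast
    then have uu: "is_unit u" unfolding ue by (rule one_plus_nil_unit)
    then have "u ^ n = 1" using n1 unfolding P_def by blast
    then show "\<exists>e u. idem e \<and> is_unit u \<and> u ^ n = 1 \<and> r = e + u"
      using e(1) uu u_def by (intro exI[of _ e] exI[of _ u]) simp
  qed
  have tcP: "P m" if tc: "torsion_clean_with TYPE('a) m" for m
    unfolding P_def
  proof (intro allI impI)
    fix v :: 'a assume v: "is_unit v"
    obtain e w where ew: "idem e" "is_unit w" "w ^ m = 1" "v = e + w"
      using tc unfolding torsion_clean_with_def by blast
    have "e = (v - 1) - (w - 1)" using ew(4) by simp
    then have "e \<in> jacobson" using jac_diff[OF unit_J[OF B' v] unit_J[OF B' ew(2)]] by simp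
    then have "e ^ Suc k = 0" using nil_pow_ge[OF N, of e "Suc k"] by simp
    then have "e = 0" using idem_pow[OF ew(1)] by simp
    then show "v ^ m = 1" using ew by simp
  qed
  have "n_torsion_clean TYPE('a) n"
    unfolding n_torsion_clean_def using n1 clean tcP nmin by blast
  then show ?thesis using UE pow by blast
qed

theorem corollary1p4:
  shows "(uniquely_clean TYPE('a::ring_1) \<longrightarrow>
            (\<forall>n. n_torsion_clean TYPE('a) n \<longleftrightarrow> unit_exponent TYPE('a) n))
       \<and> (boolean_mod_jacobson TYPE('a) \<and> nil_bounded_index (jacobson :: 'a set) \<longrightarrow>
            (\<exists>n. unit_exponent TYPE('a) n \<and> n_torsion_clean TYPE('a) n \<and> (\<exists>k. n = 2 ^ k)))"
proof (intro conjI impI allI)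
  fix n assume U: "uniquely_clean TYPE('a)"
  show "n_torsion_clean TYPE('a) n \<longleftrightarrow> unit_exponent TYPE('a) n"
    unfolding n_torsion_clean_def unit_exponent_def part1[OF U] by blast
next
  assume "boolean_mod_jacobson TYPE('a) \<and> nil_bounded_index (jacobson :: 'a set)"
  then show "\<exists>n. unit_exponent TYPE('a) n \<and> n_torsion_clean TYPE('a) n \<and> (\<exists>k. n = 2 ^ k)"
    using part2 by blast
qed

end
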